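(* Let $s \ge 4$ and let $X$ be an antipodal $s$-distance set in the unit sphere $S^{d-1}\subset\mathbb{R}^d$ with $|X| \ge 4\binom{d+s-3}{s-2} + 2$. Then every $\beta \in B(X)$ is a rational number.
   Context: A finite set $X \subset \mathbb{R}^d$ is an $s$-distance set if the set of Euclidean distances between distinct points of $X$ has exactly $s$ elements. $X$ is antipodal if $-x \in X$ for every $x \in X$. For $X \subset S^{d-1}$, $B(X) = \{(x,y) : x, y \in X, x \neq y\}$, where $(\cdot,\cdot)$ is the standard inner product. *)

theory Defs
  imports "HOL-Analysis.Analysis"
begin

definition distances :: "'a::metric_space set \<Rightarrow> real set" where
  "distances X = {dist x y | x y. x \<in> X \<and> y \<in> X \<and> x \<noteq> y}"

definition s_distance_set :: "nat \<Rightarrow> 'a::metric_space set \<Rightarrow> bool" where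
  "s_distance_set s X \<longleftrightarrow> finite X \<and> card (distances X) = s"

definition antipodal :: "'a::real_vector set \<Rightarrow> bool" where
  "antipodal X \<longleftrightarrow> (\<forall>x\<in>X. - x \<in> X)"

definition B :: "'a::real_inner set \<Rightarrow> real set" where
  "B X = {x \<bullet> y | x y. x \<in> X \<and> y \<in> X \<and> x \<noteq> y}"

end

theory Submission
  imports Defs Jordan_Normal_Form.Jordan_Normal_Form_Uniqueness Jordan_Normal_Form.Jordan_Normal_Form_Existence
begin

interpretation rph: map_poly_idom_hom "of_rat :: rat \<Rightarrow> complex" by unfold_locales

lemma rat_root_mult:
  fixes p :: "rat poly" and c :: complex
  assumes p0: "p \<noteq> 0"
    and ord: "degree p < 2 * Polynomial.order c (map_poly of_rat p)"
  shows "c \<in> \<rat>"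
proof -
  let ?mp = "\<lambda>g::rat poly. map_poly (of_rat :: rat \<Rightarrow> complex) g"
  define S where "S = {g::rat poly. g \<noteq> 0 \<and> poly (?mp g) c = 0}"
  have ord0: "Polynomial.order c (?mp p) \<noteq> 0" using ord by auto
  have mp0: "\<And>g. ?mp g = 0 \<longleftrightarrow> g = 0" by simp
  have "p \<in> S" unfolding S_def using p0 ord0 order_root[of "?mp p" c] by auto
  hence Sne: "S \<noteq> {}" by auto
  obtain f where fS: "f \<in> S" and fmin: "\<And>g. g \<in> S \<Longrightarrow> degree f \<le> degree g"
    using ex_has_least_nat[of "\<lambda>g. g \<in> S" p degree] \<open>p \<in> S\<close> by blast
  have f0: "f \<noteq> 0" and froot: "poly (?mp f) c = 0" using fS unfolding S_def by auto
  have degf: "degree f \<ge> 1"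
  proof (rule ccontr)
    assume "\<not> ?thesis"
    then have "degree f = 0" by auto
    then obtain a where "f = [:a:]" by (metis degree_eq_zeroE)
    with f0 froot show False by auto
  qed
  have dvd: "f dvd g" if "poly (?mp g) c = 0" for g
  proof -
    have "g = f * (g div f) + g mod f" by simp
    hence "?mp g = ?mp f * ?mp (g div f) + ?mp (g mod f)"
      by (metis rph.hom_add rph.hom_mult)
    hence "poly (?mp (g mod f)) c = 0" using that froot by (simp add: poly_add poly_mult)
    moreover have "g mod f = 0 \<or> degree (g mod f) < degree f"
      using degree_mod_less' f0 by blast
    ultimately have "g mod f = 0" using fmin unfolding S_def by force
    thus ?thesis by (simp add: mod_eq_0_iff_dvd)
  qed
  have ordf: "Polynomial.order c (?mp f) = 1"
  proof -
    have pd0: "pderiv f \<noteq> 0" using degf pderiv_eq_0_iff[of f] by auto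
    have "degree (pderiv f) < degree f" using degf degree_pderiv[of f] by auto
    hence "pderiv f \<notin> S" using fmin by force
    hence "poly (?mp (pderiv f)) c \<noteq> 0" using pd0 unfolding S_def by auto
    hence "poly (pderiv (?mp f)) c \<noteq> 0" by (simp add: of_rat_hom.map_poly_pderiv)
    hence o0: "Polynomial.order c (pderiv (?mp f)) = 0" by (simp add: order_0I)
    have "?mp f \<noteq> 0" using f0 by simp
    from order_pderiv[OF this froot] o0 show ?thesis by simp
  qed
  have main: "g \<noteq> 0 \<Longrightarrow> degree f * Polynomial.order c (?mp g) \<le> degree g" for g
  proof (induction "degree g" arbitrary: g rule: less_induct)
    case less
    show ?case
    proof (cases "poly (?mp g) c = 0")
      case False
      then show ?thesis by (simp add: order_0I)
    next
      case True
      from dvd[OF True] obtain q where gq: "g = f * q" by (auto elim: dvdE)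
      have q0: "q \<noteq> 0" using less.prems gq by auto
      have dg: "degree g = degree f + degree q" using gq f0 q0 by (simp add: degree_mult_eq)
      have "degree q < degree g" using dg degf by auto
      from less.hyps[OF this q0] have IH: "degree f * Polynomial.order c (?mp q) \<le> degree q" .
      have "?mp g = ?mp f * ?mp q" using gq by (simp add: rph.hom_mult)
      moreover have "?mp f * ?mp q \<noteq> 0" using f0 q0 by simp
      ultimately have "Polynomial.order c (?mp g) = 1 + Polynomial.order c (?mp q)"
        using order_mult ordf by metis
      then show ?thesis using IH dg by (simp add: algebra_simps)
    qed
  qed
  from main[OF p0] ord have "degree f * Polynomial.order c (?mp p) < 2 * Polynomial.order c (?mp p)"
    by linarith
  hence "degree f < 2" by (metis mult_less_cancel2)
  hence df: "degree f = 1" using degf by auto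
  have fab: "f = [:coeff f 0, coeff f 1:]"
  proof (rule poly_eqI)
    fix n show "coeff f n = coeff [:coeff f 0, coeff f 1:] n"
      using coeff_eq_0[of f n] df by (cases n; cases "n - 1") auto
  qed
  have b0: "coeff f 1 \<noteq> 0" using df f0 leading_coeff_neq_0[of f] by auto
  have "of_rat (coeff f 0) + c * of_rat (coeff f 1) = 0"
    using froot b0 by (subst (asm) fab) (auto simp: map_poly_pCons algebra_simps split: if_splits)
  hence "c = of_rat (- coeff f 0 / coeff f 1)" using b0
    by (simp add: of_rat_divide of_rat_minus field_simps add_eq_0_iff)
  thus ?thesis by simp
qed

lemma kernel_dim_lower:
  fixes V :: "'a :: field mat"
  assumes V: "V \<in> carrier_mat N n"
  shows "n - N \<le> kernel_dim V"
proof -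
  obtain B where gj: "gauss_jordan_single V = B" by auto
  from gauss_jordan_single[OF V gj] have B: "B \<in> carrier_mat N n" and row: "row_echelon_form B"
    by auto
  from find_base_vectors(5)[OF row B]
  have "length (pivot_positions B) = card {i. i < N \<and> row B i \<noteq> 0\<^sub>v n}" .
  also have "\<dots> \<le> card {..<N}" by (rule card_mono) auto
  finally have "length (pivot_positions B) \<le> N" by simp
  thus ?thesis unfolding kernel_dim_code gj using V by auto
qed

lemma kernel_dim_mono:
  fixes V :: "'a :: field mat"
  assumes V: "V \<in> carrier_mat N n" and U: "U \<in> carrier_mat m N"
  shows "kernel_dim V \<le> kernel_dim (U * V)"
proof -
  have UV: "U * V \<in> carrier_mat m n" using U V by auto
  interpret KV: kernel N n V by (unfold_locales, rule V)
  interpret KP: kernel m n "U * V" by (unfold_locales, rule UV)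
  obtain bas where fb: "finite bas" and bas: "KV.basis bas" using kernel_basis_exists[OF V] by auto
  obtain bas2 where fb2: "finite bas2" and bas2: "KP.basis bas2" using kernel_basis_exists[OF UV] by auto
  have dimV: "KV.dim = card bas" by (rule KV.Ker.dim_basis[OF fb bas])
  have sub1: "bas \<subseteq> mat_kernel V" using bas unfolding KV.Ker.basis_def by auto
  have sub2: "mat_kernel V \<subseteq> mat_kernel (U * V)" by (rule mat_kernel_mult_subset[OF V U])
  have li1: "KV.lin_indpt bas" using bas unfolding KV.Ker.basis_def by auto
  hence "\<not> KV.NC.lin_dep bas" using KV.lindep_same[OF sub1] by simp
  hence li2: "KP.lin_indpt bas" using KP.lindep_same sub1 sub2 by auto
  have fd: "KP.Ker.fin_dim" unfolding KP.Ker.fin_dim_def using fb2 bas2 unfolding KP.Ker.basis_def by auto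
  have "card bas \<le> KP.dim" using KP.Ker.li_le_dim(2)[OF fd _ li2] sub1 sub2 by auto
  thus ?thesis using dimV V UV by simp
qed

lemma key_mat:
  fixes Mq :: "rat mat" and U V :: "complex mat" and c :: complex
  assumes Mq: "Mq \<in> carrier_mat n n"
    and U: "U \<in> carrier_mat n N" and V: "V \<in> carrier_mat N n"
    and eq: "char_matrix (of_rat_hom.mat_hom Mq) c = U * V"
    and lt: "2 * N < n"
  shows "c \<in> \<rat>"
proof -
  define M where "M = (of_rat_hom.mat_hom Mq :: complex mat)"
  have M: "M \<in> carrier_mat n n" unfolding M_def using Mq by auto
  have k1: "n - N \<le> kernel_dim (U * V)"
    using kernel_dim_lower[OF V] kernel_dim_mono[OF V U] by linarith
  have cm: "char_matrix M c \<in> carrier_mat n n" using M by auto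
  have "dim_gen_eigenspace M c 1 = kernel_dim (char_matrix M c)"
    unfolding dim_gen_eigenspace_def using cm by simp
  also have "\<dots> = kernel_dim (U * V)" using eq unfolding M_def by simp
  finally have k2: "n - N \<le> dim_gen_eigenspace M c 1" using k1 by simp
  from char_poly_factorized[OF M] obtain as where "char_poly M = (\<Prod>a\<leftarrow>as. [:- a, 1:])" by auto
  from jordan_nf_exists[OF M this] obtain n_as where jnf: "jordan_nf M n_as" by auto
  have "dim_gen_eigenspace M c 1 \<le> Polynomial.order c (char_poly M)"
    unfolding dim_gen_eigenspace[OF jnf] jordan_nf_order[OF jnf]
    by (induct n_as) auto
  with k2 have k3: "n - N \<le> Polynomial.order c (char_poly M)" by simp
  have cp: "char_poly M = map_poly of_rat (char_poly Mq)"
    unfolding M_def by (rule of_rat_hom.char_poly_hom[OF Mq])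
  have dq: "degree (char_poly Mq) = n" using degree_monic_char_poly[OF Mq] by auto
  have nz: "char_poly Mq \<noteq> 0" using degree_monic_char_poly[OF Mq] by auto
  show ?thesis
  proof (rule rat_root_mult[OF nz])
    show "degree (char_poly Mq) < 2 * Polynomial.order c (map_poly of_rat (char_poly Mq))"
      using k3 cp dq lt by simp
  qed
qed

lemma cor_eq: "complex_of_rat q = complex_of_real (of_rat q)"
  by (cases q) (simp add: of_rat_rat)

lemma key_fun:
  fixes Y :: "'a set" and J :: "'b set" and F :: "'a \<Rightarrow> 'a \<Rightarrow> real"
    and R :: "'a \<Rightarrow> 'a \<Rightarrow> rat" and a b :: real
    and u :: "'a \<Rightarrow> 'b \<Rightarrow> real" and v :: "'b \<Rightarrow> 'a \<Rightarrow> real"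
  assumes fY: "finite Y" and fJ: "finite J" and b0: "b \<noteq> 0"
    and lt: "2 * card J < card Y"
    and FR: "\<And>x y. x \<in> Y \<Longrightarrow> y \<in> Y \<Longrightarrow> F x y = (if x = y then a else b * of_rat (R x y))"
    and Fuv: "\<And>x y. x \<in> Y \<Longrightarrow> y \<in> Y \<Longrightarrow> F x y = (\<Sum>j\<in>J. u x j * v j y)"
  shows "a / b \<in> \<rat>"
proof -
  obtain xs where xs: "set xs = Y" "distinct xs" using finite_distinct_list[OF fY] by auto
  obtain js where js: "set js = J" "distinct js" using finite_distinct_list[OF fJ] by auto
  define n where "n = length xs"
  define N where "N = length js"
  have nY: "n = card Y" unfolding n_def using xs distinct_card by metis
  have NJ: "N = card J" unfolding N_def using js distinct_card by metis
  have xsY: "\<And>i. i < n \<Longrightarrow> xs ! i \<in> Y" unfolding n_def using xs by auto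
  have xsinj: "\<And>i k. i < n \<Longrightarrow> k < n \<Longrightarrow> xs ! i = xs ! k \<longleftrightarrow> i = k"
    unfolding n_def using xs nth_eq_iff_index_eq by blast
  have bij: "bij_betw (nth js) {..<N} J" unfolding N_def using js by (metis bij_betw_nth lessThan_atLeast0)
  define Mq where "Mq = Matrix.mat n n (\<lambda>(i,k). if i = k then 0 else R (xs!i) (xs!k))"
  define U where "U = Matrix.mat n N (\<lambda>(i,j). complex_of_real (u (xs!i) (js!j)))"
  define V where "V = Matrix.mat N n (\<lambda>(j,k). complex_of_real (v (js!j) (xs!k) / b))"
  define c where "c = complex_of_real (- a / b)"
  have Mq: "Mq \<in> carrier_mat n n" unfolding Mq_def by auto
  have U: "U \<in> carrier_mat n N" unfolding U_def by auto
  have V: "V \<in> carrier_mat N n" unfolding V_def by auto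
  have eq: "char_matrix (of_rat_hom.mat_hom Mq) c = U * V"
  proof (rule eq_matI)
    fix i k assume i: "i < dim_row (U * V)" and k: "k < dim_col (U * V)"
    hence i: "i < n" and k: "k < n" using U V by auto
    have "(U * V) $$ (i, k) = (\<Sum>j<N. U $$ (i, j) * V $$ (j, k))"
      using i k U V by (simp add: scalar_prod_def lessThan_atLeast0)
    also have "\<dots> = complex_of_real ((\<Sum>j<N. u (xs!i) (js!j) * v (js!j) (xs!k)) / b)"
      using i k by (simp add: U_def V_def sum_divide_distrib)
    also have "(\<Sum>j<N. u (xs!i) (js!j) * v (js!j) (xs!k)) = (\<Sum>j\<in>J. u (xs!i) j * v j (xs!k))"
      using sum.reindex_bij_betw[OF bij, of "\<lambda>j. u (xs!i) j * v j (xs!k)"] by simp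
    also have "\<dots> = F (xs!i) (xs!k)" using Fuv xsY i k by simp
    also have "\<dots> = (if i = k then a else b * of_rat (R (xs!i) (xs!k)))" using FR xsY xsinj i k by simp
    finally have UV: "(U * V) $$ (i, k) = complex_of_real ((if i = k then a else b * of_rat (R (xs!i) (xs!k))) / b)" .
    show "char_matrix (of_rat_hom.mat_hom Mq) c $$ (i, k) = (U * V) $$ (i, k)"
      unfolding UV using i k b0 Mq by (auto simp: char_matrix_def Mq_def c_def cor_eq)
  next
    show "dim_row (char_matrix (of_rat_hom.mat_hom Mq) c) = dim_row (U * V)" using Mq U by (simp add: char_matrix_def)
    show "dim_col (char_matrix (of_rat_hom.mat_hom Mq) c) = dim_col (U * V)" using Mq V by (simp add: char_matrix_def)
  qed
  have "c \<in> \<rat>" by (rule key_mat[OF Mq U V eq]) (use lt nY NJ in simp)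
  then obtain q where "c = of_rat q" by (rule Rats_cases)
  hence "complex_of_real (- a / b) = of_rat q" unfolding c_def .
  hence "complex_of_real (- a / b) = complex_of_real (of_rat q)" by (simp only: cor_eq)
  hence "- a / b = of_rat q" by (simp only: of_real_eq_iff)
  hence "a / b = of_rat (- q)" by (simp add: of_rat_minus)
  thus ?thesis by simp
qed


no_notation Matrix.vec_index (infixl "$" 100)
no_notation Matrix.scalar_prod (infix "\<bullet>" 70)


definition monv :: "'d multiset \<Rightarrow> real ^ 'd \<Rightarrow> real" where
  "monv m x = prod_mset (image_mset (\<lambda>i. x $ i) m)"

definition inS :: "nat \<Rightarrow> (real ^ ('d::finite) \<Rightarrow> real) \<Rightarrow> bool" where
  "inS k f \<longleftrightarrow> (\<exists>c. \<forall>x. f x = (\<Sum>m\<in>multisets_of_size (UNIV::'d set) k. c m * monv m x))"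

lemma fin_mos: "finite (multisets_of_size (UNIV::('d::finite) set) k)"
  by (rule finite_multisets_of_size) simp

lemma monv_add: "monv (m1 + m2) x = monv m1 x * monv m2 x"
  by (simp add: monv_def)

lemma inS_add:
  assumes "inS k f" "inS k g" shows "inS k (\<lambda>x. f x + g x)"
proof -
  from assms obtain c1 c2 where c1: "\<forall>x. f x = (\<Sum>m\<in>multisets_of_size UNIV k. c1 m * monv m x)"
    and c2: "\<forall>x. g x = (\<Sum>m\<in>multisets_of_size UNIV k. c2 m * monv m x)" unfolding inS_def by auto
  show ?thesis unfolding inS_def
    by (rule exI[of _ "\<lambda>m. c1 m + c2 m"]) (simp add: c1 c2 algebra_simps sum.distrib)
qed

lemma inS_scale:
  assumes "inS k f" shows "inS k (\<lambda>x. r * f x)"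
proof -
  from assms obtain c1 where c1: "\<forall>x. f x = (\<Sum>m\<in>multisets_of_size UNIV k. c1 m * monv m x)"
    unfolding inS_def by auto
  show ?thesis unfolding inS_def
    by (rule exI[of _ "\<lambda>m. r * c1 m"]) (simp add: c1 sum_distrib_left algebra_simps)
qed

lemma inS_zero: "inS k (\<lambda>x. 0)"
  unfolding inS_def by (rule exI[of _ "\<lambda>m. 0"]) simp

lemma inS_sum:
  assumes "finite I" "\<And>i. i \<in> I \<Longrightarrow> inS k (f i)"
  shows "inS k (\<lambda>x. \<Sum>i\<in>I. f i x)"
  using assms
proof (induction I rule: finite_induct)
  case empty then show ?case by (simp add: inS_zero)
next
  case (insert a I)
  then show ?case by (simp add: inS_add)
qed

lemma inS_mult:
  fixes f g :: "real ^ ('d::finite) \<Rightarrow> real"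
  assumes "inS a f" "inS b g" shows "inS (a + b) (\<lambda>x. f x * g x)"
proof -
  let ?Ma = "multisets_of_size (UNIV::'d set) a"
  let ?Mb = "multisets_of_size (UNIV::'d set) b"
  let ?Mab = "multisets_of_size (UNIV::'d set) (a + b)"
  from assms obtain c1 c2 where c1: "\<forall>x. f x = (\<Sum>m\<in>?Ma. c1 m * monv m x)"
    and c2: "\<forall>x. g x = (\<Sum>m\<in>?Mb. c2 m * monv m x)" unfolding inS_def by auto
  define c where "c m = (\<Sum>p\<in>{p \<in> ?Ma \<times> ?Mb. fst p + snd p = m}. c1 (fst p) * c2 (snd p))" for m
  have fin: "finite (?Ma \<times> ?Mb)" using fin_mos by auto
  have img: "(\<lambda>p. fst p + snd p) ` (?Ma \<times> ?Mb) \<subseteq> ?Mab"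
    by (auto simp: multisets_of_size_def)
  have "f x * g x = (\<Sum>m\<in>?Mab. c m * monv m x)" for x
  proof -
    have "f x * g x = (\<Sum>p\<in>?Ma \<times> ?Mb. c1 (fst p) * c2 (snd p) * monv (fst p + snd p) x)"
      unfolding c1[rule_format] c2[rule_format] sum_product sum.cartesian_product
      by (rule sum.cong) (auto simp: monv_add algebra_simps)
    also have "\<dots> = (\<Sum>m\<in>?Mab. \<Sum>p\<in>{p \<in> ?Ma \<times> ?Mb. fst p + snd p = m}. c1 (fst p) * c2 (snd p) * monv (fst p + snd p) x)"
      by (rule sum.group[OF fin fin_mos img, symmetric])
    also have "\<dots> = (\<Sum>m\<in>?Mab. c m * monv m x)"
      unfolding c_def sum_distrib_right by (rule sum.cong) auto
    finally show ?thesis .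
  qed
  then show ?thesis unfolding inS_def by blast
qed

lemma inS_one: "inS 0 (\<lambda>x. 1)"
proof -
  have "multisets_of_size (UNIV::'d set) 0 = {{#}}" by (auto simp: multisets_of_size_def)
  then show ?thesis unfolding inS_def by (intro exI[of _ "\<lambda>m. 1"]) (simp add: monv_def)
qed

lemma inS_coord: fixes i :: "'d::finite" shows "inS 1 (\<lambda>x::real^'d. x $ i)"
proof -
  have mem: "{#i#} \<in> multisets_of_size (UNIV::'d set) 1" by (auto simp: multisets_of_size_def)
  show ?thesis unfolding inS_def
  proof (intro exI[of _ "\<lambda>m. if m = {#i#} then 1 else 0"] allI)
    fix x :: "real ^ 'd"
    show "x $ i = (\<Sum>m\<in>multisets_of_size UNIV 1. (if m = {#i#} then 1 else 0) * monv m x)"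
    proof -
      have "(\<Sum>m\<in>multisets_of_size UNIV 1. (if m = {#i#} then 1 else 0) * monv m x)
          = (\<Sum>m\<in>multisets_of_size UNIV 1. if m = {#i#} then monv m x else 0)"
        by (rule sum.cong) auto
      also have "\<dots> = monv {#i#} x" using sum.delta[OF fin_mos, of "{#i#}" "\<lambda>m. monv m x"] mem by auto
      also have "\<dots> = x $ i" by (simp add: monv_def)
      finally show ?thesis by simp
    qed
  qed
qed

lemma inS_pow: "inS k f \<Longrightarrow> inS (k * n) (\<lambda>x. f x ^ n)"
proof (induction n)
  case 0 then show ?case by (simp add: inS_one)
next
  case (Suc n)
  have "inS (k + k * n) (\<lambda>x. f x * f x ^ n)" by (rule inS_mult[OF Suc.prems Suc.IH[OF Suc.prems]])
  then show ?case by (simp add: algebra_simps)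
qed

lemma inS_prod:
  assumes "finite I" "\<And>i. i \<in> I \<Longrightarrow> inS k (f i)"
  shows "inS (k * card I) (\<lambda>x. \<Prod>i\<in>I. f i x)"
  using assms
proof (induction I rule: finite_induct)
  case empty then show ?case by (simp add: inS_one)
next
  case (insert a I)
  have "inS (k + k * card I) (\<lambda>x. f a x * (\<Prod>i\<in>I. f i x))"
    using insert by (intro inS_mult) auto
  then show ?case using insert by (simp add: algebra_simps)
qed

lemma inS_inner: "inS 1 (\<lambda>x. x \<bullet> (y :: real ^ 'd))"
proof -
  have "inS 1 (\<lambda>x. \<Sum>i\<in>UNIV. y $ i * x $ i)"
    by (intro inS_sum inS_scale inS_coord) auto
  then show ?thesis by (simp add: inner_vec_def mult.commute)
qed

lemma inS_norm2: "inS 2 (\<lambda>x::real ^ 'd. x \<bullet> x)"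
proof -
  have "inS 2 (\<lambda>x::real^'d. \<Sum>i\<in>UNIV. x $ i * x $ i)"
  proof (intro inS_sum)
    fix i :: 'd
    show "inS 2 (\<lambda>x::real^'d. x $ i * x $ i)" using inS_mult[OF inS_coord[of i] inS_coord[of i]] by (simp add: numeral_2_eq_2)
  qed simp
  then show ?thesis by (simp add: inner_vec_def)
qed



lemma case_lemma:
  fixes Y :: "(real^'d) set" and A :: "real set" and \<phi> :: "real \<Rightarrow> real"
    and G :: "real^'d \<Rightarrow> real^'d \<Rightarrow> real" and \<beta> :: real and \<sigma> :: rat and k :: nat
  assumes fY: "finite Y"
   and inner1: "\<And>x. x \<in> Y \<Longrightarrow> x \<bullet> x = 1"
   and inA: "\<And>x y. x \<in> Y \<Longrightarrow> y \<in> Y \<Longrightarrow> x \<noteq> y \<Longrightarrow> x \<bullet> y \<in> A"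
   and G: "\<And>y. y \<in> Y \<Longrightarrow> inS k (\<lambda>x. G y x)"
   and G\<phi>: "\<And>x y. x \<in> Y \<Longrightarrow> y \<in> Y \<Longrightarrow> G y x = \<phi> (x \<bullet> y)"
   and \<phi>\<beta>: "\<phi> \<beta> \<noteq> 0" and \<phi>m\<beta>: "\<phi> (-\<beta>) = of_rat \<sigma> * \<phi> \<beta>"
   and \<phi>0: "\<And>t. t \<in> A \<Longrightarrow> t \<noteq> \<beta> \<Longrightarrow> t \<noteq> -\<beta> \<Longrightarrow> \<phi> t = 0"
   and cnt: "2 * card (multisets_of_size (UNIV::'d set) k) < card Y"
  shows "\<phi> 1 / \<phi> \<beta> \<in> \<rat>"
proof -
  let ?M = "multisets_of_size (UNIV::'d set) k"
  have "\<forall>y\<in>Y. \<exists>c. \<forall>x. G y x = (\<Sum>m\<in>?M. c m * monv m x)"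
    using G unfolding inS_def by blast
  from bchoice[OF this] obtain C where C0: "\<forall>y\<in>Y. \<forall>x. G y x = (\<Sum>m\<in>?M. C y m * monv m x)"
    by blast
  have C: "\<And>y x. y \<in> Y \<Longrightarrow> G y x = (\<Sum>m\<in>?M. C y m * monv m x)" using C0 by blast
  show ?thesis
  proof (rule key_fun[OF fY fin_mos \<phi>\<beta> cnt,
        where F = "\<lambda>x y. \<phi> (x \<bullet> y)"
          and R = "\<lambda>x y. if x \<bullet> y = \<beta> then 1 else if x \<bullet> y = -\<beta> then \<sigma> else 0"
          and u = "\<lambda>x m. monv m x" and v = "\<lambda>m y. C y m"])
    fix x y assume x: "x \<in> Y" and y: "y \<in> Y"
    show "\<phi> (x \<bullet> y) = (\<Sum>m\<in>?M. monv m x * C y m)"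
      using G\<phi>[OF x y] C[OF y, of x] by (simp add: mult.commute)
    show "\<phi> (x \<bullet> y) = (if x = y then \<phi> 1 else \<phi> \<beta> *
            of_rat (if x \<bullet> y = \<beta> then 1 else if x \<bullet> y = -\<beta> then \<sigma> else 0))"
    proof (cases "x = y")
      case True then show ?thesis using inner1[OF x] by simp
    next
      case False
      have t: "x \<bullet> y \<in> A" using inA[OF x y False] .
      show ?thesis
      proof (cases "x \<bullet> y = \<beta>")
        case True then show ?thesis using False by simp
      next
        case nb: False
        show ?thesis
        proof (cases "x \<bullet> y = -\<beta>")
          case True then show ?thesis using False nb \<phi>m\<beta> by (simp add: mult.commute)
        next
          case False2: False
          show ?thesis using False nb False2 \<phi>0[OF t nb False2] by simp
        qed
      qed
    qed
  qed
qed

lemma half_exists: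
  fixes X :: "'a::real_vector set"
  assumes "finite X" "\<forall>x\<in>X. -x \<in> X" "0 \<notin> X"
  shows "\<exists>Y\<subseteq>X. card X = 2 * card Y \<and> (\<forall>x\<in>Y. -x \<notin> Y)"
  using assms
proof (induction "card X" arbitrary: X rule: less_induct)
  case less
  show ?case
  proof (cases "X = {}")
    case True then show ?thesis by auto
  next
    case False
    then obtain x where x: "x \<in> X" by auto
    have mx: "-x \<in> X" using less.prems x by auto
    have xne: "x \<noteq> -x"
    proof
      assume "x = -x"
      hence "x + x = 0" by (metis add.right_inverse)
      hence "(2::real) *\<^sub>R x = 0" by (simp add: scaleR_2)
      hence "x = 0" by simp
      with x less.prems show False by auto
    qed
    define X0 where "X0 = X - {x, -x}"
    have f0: "finite X0" using less.prems unfolding X0_def by auto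
    have cX0: "card X0 = card X - 2" unfolding X0_def using x mx xne less.prems
      by (subst card_Diff_subset) auto
    have cX: "card X \<ge> 2" using x mx xne less.prems
      by (metis card_2_iff card_mono empty_subsetI insert_subset)
    have ant0: "\<forall>z\<in>X0. -z \<in> X0" unfolding X0_def using less.prems by (auto simp: minus_equation_iff)
    have "card X0 < card X" using cX0 cX by auto
    from less.hyps[OF this f0 ant0] less.prems
    obtain Y0 where Y0: "Y0 \<subseteq> X0" "card X0 = 2 * card Y0" "\<forall>z\<in>Y0. -z \<notin> Y0"
      unfolding X0_def by auto
    have xY0: "x \<notin> Y0" using Y0 unfolding X0_def by auto
    have fY0: "finite Y0" using Y0 f0 finite_subset by auto
    show ?thesis
    proof (intro exI[of _ "insert x Y0"] conjI)
      show "insert x Y0 \<subseteq> X" using Y0 x unfolding X0_def by auto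
      show "card X = 2 * card (insert x Y0)" using Y0 cX0 cX xY0 fY0 by simp
      show "\<forall>z\<in>insert x Y0. - z \<notin> insert x Y0"
        using Y0 xne unfolding X0_def by (auto simp: minus_equation_iff)
    qed
  qed
qed

lemma binom_mono:
  assumes d: "d \<ge> 1" and kk: "k \<le> k'"
  shows "(d + k - 1) choose k \<le> (d + k' - 1) choose k'"
  using kk
proof (induction k' rule: dec_induct)
  case base then show ?case by simp
next
  case (step m)
  have e: "d + Suc m - 1 = Suc (d + m - 1)" using d by simp
  have "(d + Suc m - 1) choose (Suc m) = ((d + m - 1) choose m) + ((d + m - 1) choose (Suc m))"
    unfolding e by (rule binomial_Suc_Suc)
  then show ?case using step.IH by simp
qed



theorem theorem5p4:
  fixes X :: "(real ^ 'd) set" and s :: nat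
  assumes "s \<ge> 4"
    and "s_distance_set s X"
    and "antipodal X"
    and "X \<subseteq> sphere 0 1"
    and "real (card X) \<ge> 4 * real ((CARD('d) + s - 3) choose (s - 2)) + 2"
  shows "\<forall>\<beta>\<in>B X. \<beta> \<in> \<rat>"
proof
  note s4 = assms(1) and sd = assms(2) and ap = assms(3) and sph = assms(4) and big = assms(5)
  define d where "d = CARD('d)"
  define N where "N = (d + s - 3) choose (s - 2)"
  have d1: "d \<ge> 1" unfolding d_def by (simp add: Suc_le_eq)
  have fX: "finite X" and cardD: "card (distances X) = s" using sd unfolding s_distance_set_def by auto
  have n1: "\<And>x. x \<in> X \<Longrightarrow> x \<bullet> x = 1"
  proof -
    fix x assume "x \<in> X"
    hence "norm x = 1" using sph by (auto simp: dist_norm)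
    thus "x \<bullet> x = 1" by (simp add: power2_norm_eq_inner[symmetric])
  qed
  have antX: "\<And>x. x \<in> X \<Longrightarrow> -x \<in> X" using ap unfolding antipodal_def by auto
  have ndiff: "(x - y) \<bullet> (x - y) = x \<bullet> x - 2 * (x \<bullet> y) + y \<bullet> y" for x y :: "real^'d"
    by (simp add: inner_diff_left inner_diff_right inner_commute)
  have nsum: "(x + y) \<bullet> (x + y) = x \<bullet> x + 2 * (x \<bullet> y) + y \<bullet> y" for x y :: "real^'d"
    by (simp add: inner_add_left inner_add_right inner_commute)
  have distf: "\<And>x y. x \<in> X \<Longrightarrow> y \<in> X \<Longrightarrow> dist x y = sqrt (2 - 2 * (x \<bullet> y))"
  proof -
    fix x y assume x: "x \<in> X" and y: "y \<in> X"
    have "dist x y = sqrt ((x - y) \<bullet> (x - y))" by (simp add: dist_norm norm_eq_sqrt_inner)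
    also have "\<dots> = sqrt (2 - 2 * (x \<bullet> y))" using ndiff n1[OF x] n1[OF y] by simp
    finally show "dist x y = sqrt (2 - 2 * (x \<bullet> y))" .
  qed
  have DB: "distances X = (\<lambda>t. sqrt (2 - 2 * t)) ` B X"
    unfolding distances_def B_def using distf by auto (metis distf)
  have injB: "inj_on (\<lambda>t. sqrt (2 - 2 * t)) (B X)" by (auto simp: inj_on_def)
  have cB: "card (B X) = s" using card_image[OF injB] DB cardD by simp
  have fB: "finite (B X)"
  proof -
    have "B X \<subseteq> (\<lambda>p. fst p \<bullet> snd p) ` (X \<times> X)" unfolding B_def by force
    thus ?thesis using fX finite_subset by blast
  qed
  define A where "A = {x \<bullet> y | x y. x \<in> X \<and> y \<in> X \<and> x \<noteq> y \<and> x \<noteq> -y}"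
  have AB: "A \<subseteq> B X" unfolding A_def B_def by blast
  have fA: "finite A" using AB fB finite_subset by blast
  have N4: "4 * N + 2 \<le> card X"
  proof -
    have "real (4 * N + 2) \<le> real (card X)" using big unfolding N_def d_def by simp
    thus ?thesis by (simp only: of_nat_le_iff)
  qed
  have "X \<noteq> {}" using N4 fX by auto
  then obtain x0 where x0: "x0 \<in> X" by auto
  have x00: "x0 \<noteq> -x0"
  proof
    assume "x0 = -x0"
    hence "x0 \<bullet> x0 = - (x0 \<bullet> x0)" by (metis inner_minus_left)
    with n1[OF x0] show False by simp
  qed
  have m1B: "-1 \<in> B X" unfolding B_def using x0 antX[OF x0] x00 n1[OF x0]
    by (intro CollectI exI[of _ x0] exI[of _ "-x0"]) auto
  have m1A: "-1 \<notin> A"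
  proof
    assume "-1 \<in> A"
    then obtain x y where x: "x \<in> X" and y: "y \<in> X" and ne: "x \<noteq> -y" and xy: "x \<bullet> y = -1"
      unfolding A_def by auto
    have "(x + y) \<bullet> (x + y) = 0" using nsum n1[OF x] n1[OF y] xy by simp
    hence "x + y = 0" by simp
    hence "x = -y" by (simp add: eq_neg_iff_add_eq_0)
    with ne show False ..
  qed
  have cA: "card A \<le> s - 1"
  proof -
    have "A \<subseteq> B X - {-1}" using AB m1A by auto
    hence "card A \<le> card (B X - {-1})" using fB by (intro card_mono) auto
    also have "\<dots> = s - 1" using cB m1B fB by simp
    finally show ?thesis .
  qed
  have Asym: "\<And>t. t \<in> A \<Longrightarrow> -t \<in> A"
  proof -
    fix t assume "t \<in> A"
    then obtain x y where x: "x \<in> X" and y: "y \<in> X" and ne: "x \<noteq> y" "x \<noteq> -y" and t: "t = x \<bullet> y"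
      unfolding A_def by auto
    show "-t \<in> A" unfolding A_def using x antX[OF y] ne t
      by (intro CollectI exI[of _ x] exI[of _ "-y"]) auto
  qed
  have Alt: "\<And>t. t \<in> A \<Longrightarrow> t < 1"
  proof -
    fix t assume "t \<in> A"
    then obtain x y where x: "x \<in> X" and y: "y \<in> X" and ne: "x \<noteq> y" and t: "t = x \<bullet> y"
      unfolding A_def by auto
    have nx: "norm x = 1" and ny: "norm y = 1" using n1[OF x] n1[OF y] by (simp_all add: norm_eq_sqrt_inner)
    have le: "t \<le> 1" using norm_cauchy_schwarz[of x y] nx ny t by simp
    have "t \<noteq> 1"
    proof
      assume "t = 1"
      hence "(x - y) \<bullet> (x - y) = 0" using ndiff n1[OF x] n1[OF y] t by simp
      hence "x = y" by simp
      with ne show False ..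
    qed
    with le show "t < 1" by simp
  qed
  have BA: "\<And>\<beta>. \<beta> \<in> B X \<Longrightarrow> \<beta> = -1 \<or> \<beta> \<in> A"
  proof -
    fix \<beta> assume "\<beta> \<in> B X"
    then obtain x y where x: "x \<in> X" and y: "y \<in> X" and ne: "x \<noteq> y" and t: "\<beta> = x \<bullet> y"
      unfolding B_def by auto
    show "\<beta> = -1 \<or> \<beta> \<in> A"
    proof (cases "x = -y")
      case True then show ?thesis using t n1[OF y] by simp
    next
      case False then show ?thesis unfolding A_def using x y ne t by blast
    qed
  qed
  have X0: "0 \<notin> X" using n1 by force
  obtain Y where YX: "Y \<subseteq> X" and cY: "card X = 2 * card Y" and Yneg: "\<forall>x\<in>Y. -x \<notin> Y"
    using half_exists[OF fX _ X0] antX by blast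
  have fY: "finite Y" using YX fX finite_subset by blast
  have Y1: "\<And>x. x \<in> Y \<Longrightarrow> x \<bullet> x = 1" using YX n1 by auto
  have YA: "\<And>x y. x \<in> Y \<Longrightarrow> y \<in> Y \<Longrightarrow> x \<noteq> y \<Longrightarrow> x \<bullet> y \<in> A"
  proof -
    fix x y assume x: "x \<in> Y" and y: "y \<in> Y" and ne: "x \<noteq> y"
    have "x \<noteq> -y" using Yneg x y by auto
    thus "x \<bullet> y \<in> A" unfolding A_def using x y ne YX by blast
  qed
  have cntY: "2 * N < card Y" using N4 cY by simp
  have cardM: "card (multisets_of_size (UNIV::'d set) k) = (d + k - 1) choose k" for k
    unfolding d_def by (rule card_multisets_of_size) simp
  have cntk: "2 * card (multisets_of_size (UNIV::'d set) k) < card Y" if "k \<le> s - 2" for k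
  proof -
    have "(d + k - 1) choose k \<le> (d + (s - 2) - 1) choose (s - 2)" by (rule binom_mono[OF d1 that])
    also have "d + (s - 2) - 1 = d + s - 3" using s4 by simp
    finally show ?thesis using cntY unfolding cardM N_def by simp
  qed
  fix \<beta> assume \<beta>B: "\<beta> \<in> B X"
  show "\<beta> \<in> \<rat>"
  proof (cases "\<beta> = -1 \<or> \<beta> = 0")
    case True then show ?thesis by auto
  next
    case False
    hence \<beta>A: "\<beta> \<in> A" and \<beta>0: "\<beta> \<noteq> 0" using BA[OF \<beta>B] by auto
    define bb where "bb = \<bar>\<beta>\<bar>"
    have bb0: "bb > 0" using \<beta>0 unfolding bb_def by simp
    have bbpm: "bb = \<beta> \<or> bb = -\<beta>" unfolding bb_def by (simp add: abs_if)
    define Q where "Q = {\<alpha> \<in> A. \<alpha> > 0 \<and> \<alpha> \<noteq> bb}"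
    define e :: nat where "e = (if 0 \<in> A then 1 else 0)"
    define h where "h t = t ^ e * (\<Prod>\<alpha>\<in>Q. t\<^sup>2 - \<alpha>\<^sup>2)" for t :: real
    have fQ: "finite Q" using fA unfolding Q_def by auto
    have QA: "Q \<subseteq> A" unfolding Q_def by auto
    have mb: "-\<beta> \<in> A" using Asym[OF \<beta>A] .
    have bne: "\<beta> \<noteq> -\<beta>" using \<beta>0 by simp
    have cnt: "e + 2 * card Q + 2 \<le> card A"
    proof -
      define Z where "Z = A \<inter> {0}"
      have cZ: "card Z = e" unfolding Z_def e_def by auto
      have cQ': "card (uminus ` Q) = card Q" by (rule card_image) (auto simp: inj_on_def)
      have c2: "card {\<beta>, -\<beta>} = 2" using bne by simp
      have d1: "Z \<inter> Q = {}" unfolding Z_def Q_def by auto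
      have d2: "(Z \<union> Q) \<inter> uminus ` Q = {}" unfolding Z_def Q_def by auto
      have d3: "(Z \<union> Q \<union> uminus ` Q) \<inter> {\<beta>, -\<beta>} = {}"
        unfolding Z_def Q_def using bbpm \<beta>0 by (auto simp: bb_def)
      have fZ: "finite Z" unfolding Z_def by auto
      have u1: "card (Z \<union> Q) = e + card Q" using card_Un_disjoint[OF fZ fQ d1] cZ by simp
      have u2: "card (Z \<union> Q \<union> uminus ` Q) = e + 2 * card Q"
        using card_Un_disjoint[of "Z \<union> Q" "uminus ` Q"] fZ fQ d2 u1 cQ' by simp
      have "card (Z \<union> Q \<union> uminus ` Q \<union> {\<beta>, -\<beta>}) = e + 2 * card Q + 2"
        using card_Un_disjoint[of "Z \<union> Q \<union> uminus ` Q" "{\<beta>, -\<beta>}"] fZ fQ d3 u2 c2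
        by (simp only: finite_Un finite_imageI finite.emptyI finite_insert)
      moreover have "Z \<union> Q \<union> uminus ` Q \<union> {\<beta>, -\<beta>} \<subseteq> A"
        unfolding Z_def Q_def using Asym \<beta>A mb by auto
      ultimately show ?thesis using card_mono[OF fA] by metis
    qed
    define k0 where "k0 = e + 2 * card Q"
    have k0s: "k0 + 1 \<le> s - 2" using cnt cA s4 unfolding k0_def by simp
    have h1: "h 1 \<noteq> 0"
    proof -
      have "\<forall>\<alpha>\<in>Q. 1\<^sup>2 - \<alpha>\<^sup>2 \<noteq> (0::real)"
      proof
        fix \<alpha> assume "\<alpha> \<in> Q"
        hence "0 < \<alpha>" "\<alpha> < 1" using Alt unfolding Q_def by auto
        hence "\<alpha>\<^sup>2 < 1" by (simp add: power_less_one_iff abs_less_iff)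
        thus "1\<^sup>2 - \<alpha>\<^sup>2 \<noteq> (0::real)" by simp
      qed
      thus ?thesis unfolding h_def using fQ by (simp add: prod_zero_iff)
    qed
    have h2: "h \<beta> \<noteq> 0"
    proof -
      have "\<forall>\<alpha>\<in>Q. \<beta>\<^sup>2 - \<alpha>\<^sup>2 \<noteq> 0"
      proof
        fix \<alpha> assume a: "\<alpha> \<in> Q"
        show "\<beta>\<^sup>2 - \<alpha>\<^sup>2 \<noteq> 0"
        proof
          assume "\<beta>\<^sup>2 - \<alpha>\<^sup>2 = 0"
          hence "\<alpha> = \<beta> \<or> \<alpha> = -\<beta>" by (auto simp: power2_eq_iff)
          with a show False unfolding Q_def bb_def by auto
        qed
      qed
      thus ?thesis unfolding h_def using fQ \<beta>0 by (simp add: prod_zero_iff)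
    qed
    have h3: "h t = 0" if t: "t \<in> A" "t \<noteq> \<beta>" "t \<noteq> -\<beta>" for t
    proof -
      consider "t = 0" | "t > 0" | "t < 0" by linarith
      then show ?thesis
      proof cases
        case 1
        then have "e = 1" using t unfolding e_def by simp
        then show ?thesis unfolding h_def using 1 by simp
      next
        case 2
        then have "t \<in> Q" using t bbpm unfolding Q_def by auto
        then show ?thesis unfolding h_def using fQ by (auto simp: prod_zero_iff)
      next
        case 3
        then have "-t \<in> Q" using t bbpm Asym[OF t(1)] unfolding Q_def by auto
        then have "\<exists>\<alpha>\<in>Q. t\<^sup>2 - \<alpha>\<^sup>2 = 0" by (intro bexI[of _ "-t"]) simp_all
        then show ?thesis unfolding h_def using fQ by (simp add: prod_zero_iff)
      qed
    qed
    have h4: "h (-\<beta>) = (-1) ^ e * h \<beta>"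
      unfolding h_def by (simp add: power_minus[of \<beta> e])
    define G where "G y x = (x \<bullet> y) ^ e * (\<Prod>\<alpha>\<in>Q. (x \<bullet> y)\<^sup>2 - \<alpha>\<^sup>2 * (x \<bullet> x))" for y x :: "real^'d"
    have Gin: "inS k0 (\<lambda>x. G y x)" for y
    proof -
      have i1: "inS (1 * e) (\<lambda>x. (x \<bullet> y) ^ e)" by (rule inS_pow[OF inS_inner])
      have i2: "inS 2 (\<lambda>x. (x \<bullet> y)\<^sup>2 - \<alpha>\<^sup>2 * (x \<bullet> x))" for \<alpha>
      proof -
        have a: "inS (1 * 2) (\<lambda>x. (x \<bullet> y) ^ 2)" by (rule inS_pow[OF inS_inner])
        have b: "inS 2 (\<lambda>x. (- \<alpha>\<^sup>2) * (x \<bullet> x))" by (rule inS_scale[OF inS_norm2])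
        have "inS 2 (\<lambda>x. (x \<bullet> y) ^ 2 + (- \<alpha>\<^sup>2) * (x \<bullet> x))" using inS_add[OF _ b] a by simp
        thus ?thesis by simp
      qed
      have i3: "inS (2 * card Q) (\<lambda>x. \<Prod>\<alpha>\<in>Q. (x \<bullet> y)\<^sup>2 - \<alpha>\<^sup>2 * (x \<bullet> x))"
        by (rule inS_prod[OF fQ i2])
      have "inS (1 * e + 2 * card Q) (\<lambda>x. G y x)" unfolding G_def by (rule inS_mult[OF i1 i3])
      thus ?thesis unfolding k0_def by simp
    qed
    have GY: "G y x = h (x \<bullet> y)" if "x \<in> Y" "y \<in> Y" for x y
      unfolding G_def h_def using Y1[OF that(1)] by simp
    have r1: "h 1 / h \<beta> \<in> \<rat>"
    proof (rule case_lemma[OF fY Y1 YA Gin GY h2, where \<sigma> = "(-1) ^ e"])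
      show "h (- \<beta>) = of_rat ((- 1) ^ e) * h \<beta>" using h4 by (simp add: of_rat_power of_rat_minus)
      show "\<And>t. t \<in> A \<Longrightarrow> t \<noteq> \<beta> \<Longrightarrow> t \<noteq> - \<beta> \<Longrightarrow> h t = 0" using h3 by blast
      show "2 * card (multisets_of_size (UNIV::'d set) k0) < card Y" using cntk[of k0] k0s by simp
    qed auto
    define h' where "h' t = t * h t" for t
    define G' where "G' y x = (x \<bullet> y) * G y x" for y x :: "real^'d"
    have Gin': "inS (1 + k0) (\<lambda>x. G' y x)" for y
      unfolding G'_def by (rule inS_mult[OF inS_inner Gin])
    have GY': "G' y x = h' (x \<bullet> y)" if "x \<in> Y" "y \<in> Y" for x y
      unfolding G'_def h'_def using GY[OF that] by simp
    have h2': "h' \<beta> \<noteq> 0" unfolding h'_def using h2 \<beta>0 by simp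
    have r2: "h' 1 / h' \<beta> \<in> \<rat>"
    proof (rule case_lemma[OF fY Y1 YA Gin' GY' h2', where \<sigma> = "- ((-1) ^ e)"])
      show "h' (- \<beta>) = of_rat (- ((- 1) ^ e)) * h' \<beta>" unfolding h'_def using h4
        by (simp add: of_rat_power of_rat_minus)
      show "\<And>t. t \<in> A \<Longrightarrow> t \<noteq> \<beta> \<Longrightarrow> t \<noteq> - \<beta> \<Longrightarrow> h' t = 0" unfolding h'_def using h3 by simp
      show "2 * card (multisets_of_size (UNIV::'d set) (1 + k0)) < card Y" using cntk[of "1 + k0"] k0s by simp
    qed auto
    have "\<beta> = (h 1 / h \<beta>) / (h' 1 / h' \<beta>)" unfolding h'_def using h1 h2 \<beta>0 by (simp add: field_simps)
    thus ?thesis using r1 r2 by (metis Rats_divide)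
  qed
qed


end
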